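(* Let $C_1,\dots,C_K$ be $K\ge 2$ initial clusters (disjoint groups of users) and let $\alpha\in(0,1)$. Suppose a notion of "similarity" between clusters (including clusters formed as unions of the $C_i$) is given which is merge-invariant: whenever $A$, $B$, $D$ are clusters that are pairwise similar, $A$ is similar to the merged cluster $B\cup D$. Consider the following procedure. Set $C^{(0)}_i=C_i$ for $1\le i\le K$ and $b=0$. At iteration $b$ (with current clusters $C^{(b)}_1,\dots,C^{(b)}_{K-b}$), for every pair $i\neq j$ compute a p-value $\hat p^{(b)}_{i,j}$ for the hypothesis $H^{(b)}_{i,j}$: "$C^{(b)}_i$ is similar to $C^{(b)}_j$". If $\hat p^{(b)}_{i,j}<\alpha/K$ for all pairs $i\neq j$, stop, reject the null hypothesis, and report $C^{(b)}_1,\dots,C^{(b)}_{K-b}$ as disparate clusters. Otherwise merge the two clusters with the largest p-value $\hat p^{(b)}_{i,j}$ into one cluster, yielding clusters $C^{(b+1)}_1,\dots,C^{(b+1)}_{K-b-1}$, set $b\leftarrow b+1$ and repeat (if only one cluster remains, stop without rejecting). Assume the p-values are valid (i.e. whenever $H^{(b)}_{i,j}$ is true, $P(\hat p^{(b)}_{i,j}\le t)\le t$ for all $t\in[0,1]$) and are independent of the previous decisions to merge clusters (so this validity holds conditionally on the merge history). Then: (1) if the null hypothesis $H_0$: "$C_i$ is similar to $C_j$ for all $i\neq j$, $1\le i,j\le K$" is true, the probability that the procedure rejects $H_0$ is at most $\alpha$; and (2) the probability that the procedure rejects and reports clusters $C^{(b)}_1,\dots,C^{(b)}_{K-b}$ as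 disparate when in fact at least one pair of these reported clusters is similar is at most $\alpha$.
   Context: A "cluster" is a set of users formed as a union of some of the initial groups $C_1,\dots,C_K$. "Similarity" is an arbitrary pre-specified binary relation between clusters (e.g. equal treatment effect, equal lift, or equality of a fairness metric), assumed to satisfy the merge-invariance property stated in the claim. A p-value for a hypothesis is a statistic taking values in $[0,1]$. *)

theory Defs
  imports "HOL-Probability.Probability" "HOL-Library.Multiset"
begin

definition is_cluster :: "'u set list \<Rightarrow> 'u set \<Rightarrow> bool" where
  "is_cluster Cs X \<longleftrightarrow> (\<exists>I. I \<subseteq> {..<length Cs} \<and> I \<noteq> {} \<and> X = (\<Union>i\<in>I. Cs ! i))"

definition merge_invariant :: "'u set list \<Rightarrow> ('u set \<Rightarrow> 'u set \<Rightarrow> bool) \<Rightarrow> bool" where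
  "merge_invariant Cs sim \<longleftrightarrow>
     (\<forall>A B D. is_cluster Cs A \<and> is_cluster Cs B \<and> is_cluster Cs D \<and>
        sim A B \<and> sim A D \<and> sim B D \<longrightarrow> sim A (B \<union> D))"

text \<open>pv b i j \<omega> is the p-value at iteration b for the pair of current clusters at
  positions i, j; cfg b \<omega> is the list of current clusters at iteration b.\<close>
definition all_small ::
  "(nat \<Rightarrow> nat \<Rightarrow> nat \<Rightarrow> 'a \<Rightarrow> real) \<Rightarrow> (nat \<Rightarrow> 'a \<Rightarrow> 'u set list) \<Rightarrow> real \<Rightarrow> nat \<Rightarrow> 'a \<Rightarrow> bool" where
  "all_small pv cfg c b \<omega> \<longleftrightarrow>
     (\<forall>i<length (cfg b \<omega>). \<forall>j<length (cfg b \<omega>). i \<noteq> j \<longrightarrow> pv b i j \<omega> < c)"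

definition stops ::
  "(nat \<Rightarrow> nat \<Rightarrow> nat \<Rightarrow> 'a \<Rightarrow> real) \<Rightarrow> (nat \<Rightarrow> 'a \<Rightarrow> 'u set list) \<Rightarrow> real \<Rightarrow> nat \<Rightarrow> 'a \<Rightarrow> bool" where
  "stops pv cfg c b \<omega> \<longleftrightarrow> length (cfg b \<omega>) < 2 \<or> all_small pv cfg c b \<omega>"

definition reached ::
  "(nat \<Rightarrow> nat \<Rightarrow> nat \<Rightarrow> 'a \<Rightarrow> real) \<Rightarrow> (nat \<Rightarrow> 'a \<Rightarrow> 'u set list) \<Rightarrow> real \<Rightarrow> nat \<Rightarrow> 'a \<Rightarrow> bool" where
  "reached pv cfg c b \<omega> \<longleftrightarrow> (\<forall>b'<b. \<not> stops pv cfg c b' \<omega>)"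

definition rejects_at ::
  "(nat \<Rightarrow> nat \<Rightarrow> nat \<Rightarrow> 'a \<Rightarrow> real) \<Rightarrow> (nat \<Rightarrow> 'a \<Rightarrow> 'u set list) \<Rightarrow> real \<Rightarrow> nat \<Rightarrow> 'a \<Rightarrow> bool" where
  "rejects_at pv cfg c b \<omega> \<longleftrightarrow>
     reached pv cfg c b \<omega> \<and> length (cfg b \<omega>) \<ge> 2 \<and> all_small pv cfg c b \<omega>"

text \<open>One merge step: h' arises from h by merging two clusters (positions i \<noteq> j) whose
  p-value is largest among all pairs (any tie-breaking, any ordering of the result).\<close>
definition merge_step ::
  "(nat \<Rightarrow> nat \<Rightarrow> nat \<Rightarrow> 'a \<Rightarrow> real) \<Rightarrow> nat \<Rightarrow> 'a \<Rightarrow> 'u set list \<Rightarrow> 'u set list \<Rightarrow> bool" where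
  "merge_step pv b \<omega> h h' \<longleftrightarrow>
     (\<exists>i j. i < length h \<and> j < length h \<and> i \<noteq> j \<and>
        (\<forall>i' j'. i' < length h \<and> j' < length h \<and> i' \<noteq> j' \<longrightarrow> pv b i' j' \<omega> \<le> pv b i j \<omega>) \<and>
        mset h' = mset h - {# h ! i, h ! j #} + {# h ! i \<union> h ! j #})"

end

theory Submission
  imports Defs
begin

lemma pos2:
  assumes "p < length h" "q < length h" "p \<noteq> q"
  shows "{#h!p, h!q#} \<subseteq># mset h"
  unfolding subseteq_mset_def
proof
  fix z
  have c: "count (mset h) z = card {k. k < length h \<and> h ! k = z}"
    by (simp add: count_mset count_list_eq_length_filter length_filter_conv_card eq_commute) 
  show "count {#h ! p, h ! q#} z \<le> count (mset h) z"
  proof (cases "h!p = z \<and> h!q = z")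
    case True
    have "{p,q} \<subseteq> {k. k < length h \<and> h ! k = z}" using True assms by auto
    then have "card {p,q} \<le> card {k. k < length h \<and> h ! k = z}" by (intro card_mono) auto
    then show ?thesis using True assms c by simp
  next
    case False
    then show ?thesis using assms by (auto simp: Suc_le_eq intro!: count_mset_gt_0)
  qed
qed

lemma two_elems: "2 \<le> card (S::nat set) \<Longrightarrow> \<exists>p\<in>S. \<exists>q\<in>S. p \<noteq> q"
proof -
  assume a: "2 \<le> card S"
  then have "finite S" "S \<noteq> {}" by (auto intro: card_ge_0_finite)
  then obtain p where p: "p \<in> S" by auto
  have "card (S - {p}) \<ge> 1" using a p \<open>finite S\<close> by simp
  then obtain q where "q \<in> S - {p}" by (metis One_nat_def card.empty ex_in_conv not_less_eq_eq zero_le)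
  then show ?thesis using p by blast
qed

lemma msim_step:
  assumes ab: "{#a,b#} \<subseteq># m" and sm: "\<forall>x y. {#x,y#} \<subseteq># m \<longrightarrow> S x y"
    and sym: "\<forall>x y. S x y \<longrightarrow> S y x" and Pm: "\<forall>x\<in>#m. P x"
    and inv: "\<And>A B D. P A \<Longrightarrow> P B \<Longrightarrow> P D \<Longrightarrow> S A B \<Longrightarrow> S A D \<Longrightarrow> S B D \<Longrightarrow> S A (B \<union> D)"
  shows "\<forall>x y. {#x,y#} \<subseteq># (m - {#a,b#} + {#a \<union> b#}) \<longrightarrow> S x y"
proof (intro allI impI)
  fix x y assume xy: "{#x,y#} \<subseteq># (m - {#a,b#} + {#a \<union> b#})"
  define r where "r = m - {#a,b#}"
  have mr: "m = r + {#a,b#}" using ab unfolding r_def by (metis subset_mset.diff_add)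
  have key: "S z (a \<union> b)" if "z \<in># r" for z
  proof -
    have "{#z,a,b#} \<subseteq># m" using that mr by (simp add: insert_subset_eq_iff)
    then have "{#z,a#} \<subseteq># m" "{#z,b#} \<subseteq># m" "{#a,b#} \<subseteq># m"
    proof -
      have "{#z,a#} \<subseteq># {#z,a,b#}" "{#z,b#} \<subseteq># {#z,a,b#}" by (simp_all add: add_mset_commute)
      then show "{#z,a#} \<subseteq># m" "{#z,b#} \<subseteq># m" "{#a,b#} \<subseteq># m"
        using \<open>{#z,a,b#} \<subseteq># m\<close> ab subset_mset.order_trans by blast+
    qed
    moreover have "P z" "P a" "P b" using Pm mr that by auto
    ultimately show ?thesis using sm inv by blast
  qed
  show "S x y"
  proof (cases "x = a \<union> b")
    case True
    then have "y \<in># r" using xy unfolding r_def[symmetric] by simp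
    then show ?thesis using key sym True by blast
  next
    case F1: False
    show ?thesis
    proof (cases "y = a \<union> b")
      case True
      then have "x \<in># r" using xy unfolding r_def[symmetric]
        by (metis add_mset_commute add_mset_add_single mset_subset_eq_add_mset_cancel single_subset_iff)
      then show ?thesis using key sym True by blast
    next
      case False
      have "count {#x,y#} z \<le> count r z" for z
      proof -
        have "count {#x,y#} z \<le> count (r + {#a \<union> b#}) z" using xy unfolding r_def[symmetric]
          by (simp only: subseteq_mset_def)
        then show ?thesis using F1 False by (cases "z = a \<union> b") auto
      qed
      then have "{#x,y#} \<subseteq># r" by (simp add: subseteq_mset_def)
      then have "{#x,y#} \<subseteq># m" using mr by (metis mset_subset_eq_add_left subset_mset.order_trans)
      then show ?thesis using sm by blast
    qed
  qed
qed

lemma pos2_conv: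
  assumes "{#x,y#} \<subseteq># mset h"
  shows "\<exists>p<length h. \<exists>q<length h. p \<noteq> q \<and> h!p = x \<and> h!q = y"
proof -
  have c: "count (mset h) z = card {k. k < length h \<and> h ! k = z}" for z
    by (simp add: count_mset count_list_eq_length_filter length_filter_conv_card eq_commute)
  have le: "count {#x,y#} z \<le> count (mset h) z" for z using assms by (simp only: subseteq_mset_def)
  show ?thesis
  proof (cases "x = y")
    case True
    have "2 \<le> card {k. k < length h \<and> h ! k = x}" using le[of x] c[of x] True by simp
    then obtain p q where "p \<in> {k. k < length h \<and> h ! k = x}" "q \<in> {k. k < length h \<and> h ! k = x}" "p \<noteq> q"
      using two_elems by blast
    then show ?thesis using True by blast
  next
    case False
    have "count (mset h) x \<ge> 1" "count (mset h) y \<ge> 1" using le[of x] le[of y] False by (auto split: if_splits)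
    then have "x \<in> set h" "y \<in> set h" by (metis count_mset_0_iff not_one_le_zero)+
    then obtain p q where "p < length h" "h!p = x" "q < length h" "h!q = y"
      by (metis in_set_conv_nth)
    then show ?thesis using False by blast
  qed
qed

lemma is_cluster_single: "k < length Cs \<Longrightarrow> is_cluster Cs (Cs!k)"
  unfolding is_cluster_def by (rule exI[of _ "{k}"]) auto

lemma is_cluster_Un: "is_cluster Cs X \<Longrightarrow> is_cluster Cs Y \<Longrightarrow> is_cluster Cs (X \<union> Y)"
  unfolding is_cluster_def
proof (elim exE conjE)
  fix I J assume "I \<subseteq> {..<length Cs}" "I \<noteq> {}" "X = (\<Union>i\<in>I. Cs ! i)" "J \<subseteq> {..<length Cs}" "Y = (\<Union>i\<in>J. Cs ! i)"
  then show "\<exists>I. I \<subseteq> {..<length Cs} \<and> I \<noteq> {} \<and> X \<union> Y = (\<Union>i\<in>I. Cs ! i)"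
    by (intro exI[of _ "I \<union> J"]) auto
qed

lemma finite_clusters: "finite {X. is_cluster Cs X}"
proof (rule finite_subset)
  show "{X. is_cluster Cs X} \<subseteq> (\<lambda>I. \<Union>i\<in>I. Cs ! i) ` Pow {..<length Cs}"
    unfolding is_cluster_def by auto
qed auto

theorem theorem4p2:
  fixes M :: "'a measure"
    and Cs :: "'u set list"
    and sim :: "'u set \<Rightarrow> 'u set \<Rightarrow> bool"
    and \<alpha> :: real
    and pv :: "nat \<Rightarrow> nat \<Rightarrow> nat \<Rightarrow> 'a \<Rightarrow> real"
    and cfg :: "nat \<Rightarrow> 'a \<Rightarrow> 'u set list"
  defines "K \<equiv> length Cs"
  defines "c \<equiv> \<alpha> / real K"
  assumes P: "prob_space M"
    and K2: "K \<ge> 2"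
    and disj: "\<forall>i<K. \<forall>j<K. i \<noteq> j \<longrightarrow> Cs ! i \<inter> Cs ! j = {}"
    and alpha: "0 < \<alpha>" "\<alpha> < 1"
    and sim_sym: "\<forall>X Y. sim X Y \<longrightarrow> sim Y X"
    and merge_inv: "merge_invariant Cs sim"
    and pv_meas: "\<forall>b i j. pv b i j \<in> borel_measurable M"
    and pv_range: "\<forall>b i j. \<forall>\<omega>\<in>space M. 0 \<le> pv b i j \<omega> \<and> pv b i j \<omega> \<le> 1"
    and cfg_meas: "\<forall>b. cfg b \<in> measurable M (count_space UNIV)"
    and init: "\<forall>\<omega>\<in>space M. cfg 0 \<omega> = Cs"
    and step: "\<forall>\<omega>\<in>space M. \<forall>b. reached pv cfg c b \<omega> \<and> \<not> stops pv cfg c b \<omega> \<longrightarrow>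
                 merge_step pv b \<omega> (cfg b \<omega>) (cfg (Suc b) \<omega>)"
    and valid: "\<forall>b (H :: nat \<Rightarrow> 'u set list) i j t.
                 i < length (H b) \<and> j < length (H b) \<and> i \<noteq> j \<and> sim (H b ! i) (H b ! j)
                 \<and> 0 \<le> t \<and> t \<le> 1 \<longrightarrow>
                 measure M {\<omega> \<in> space M. reached pv cfg c b \<omega> \<and> (\<forall>b'\<le>b. cfg b' \<omega> = H b')
                                          \<and> pv b i j \<omega> \<le> t}
                 \<le> t * measure M {\<omega> \<in> space M. reached pv cfg c b \<omega> \<and> (\<forall>b'\<le>b. cfg b' \<omega> = H b')}"
  shows "((\<forall>i<K. \<forall>j<K. i \<noteq> j \<longrightarrow> sim (Cs ! i) (Cs ! j)) \<longrightarrow>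
            measure M {\<omega> \<in> space M. \<exists>b. rejects_at pv cfg c b \<omega>} \<le> \<alpha>)
       \<and> measure M {\<omega> \<in> space M. \<exists>b. rejects_at pv cfg c b \<omega> \<and>
            (\<exists>i<length (cfg b \<omega>). \<exists>j<length (cfg b \<omega>). i \<noteq> j \<and> sim (cfg b \<omega> ! i) (cfg b \<omega> ! j))}
         \<le> \<alpha>"
proof -
  interpret prob_space M by (rule P)
  note pv_m[measurable] = pv_meas[rule_format]
  note cfg_m[measurable] = cfg_meas[rule_format]
  have cfgQ: "Measurable.pred M (\<lambda>\<omega>. Q (cfg b \<omega>))" for Q b
    by (rule measurable_compose[OF cfg_m]) simp
  have reached_m[measurable]: "Measurable.pred M (reached pv cfg c b)" for b
    unfolding reached_def stops_def all_small_def by measurable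
  have c0: "0 \<le> c" "c \<le> 1" using alpha K2 unfolding c_def by (auto simp: field_simps)
  define H0 where "H0 \<longleftrightarrow> (\<forall>i<K. \<forall>j<K. i \<noteq> j \<longrightarrow> sim (Cs ! i) (Cs ! j))"
  have inv: "length (cfg b \<omega>) = K - b \<and> b < K \<and> (\<forall>X\<in>set (cfg b \<omega>). is_cluster Cs X) \<and>
      (H0 \<longrightarrow> (\<forall>x y. {#x,y#} \<subseteq># mset (cfg b \<omega>) \<longrightarrow> sim x y))"
    if "\<omega> \<in> space M" "reached pv cfg c b \<omega>" for b \<omega>
    using that(2)
  proof (induction b)
    case 0
    have "sim x y" if "H0" "{#x,y#} \<subseteq># mset Cs" for x y
      using pos2_conv[OF that(2)] that(1) unfolding H0_def K_def by blast
    then show ?case using init that(1) K2 is_cluster_single unfolding K_def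
      by (auto simp: in_set_conv_nth)
  next
    case (Suc b)
    have rb: "reached pv cfg c b \<omega>" and ns: "\<not> stops pv cfg c b \<omega>"
      using Suc.prems unfolding reached_def by auto
    note IH = Suc.IH[OF rb]
    define h where "h = cfg b \<omega>"
    define h' where "h' = cfg (Suc b) \<omega>"
    have len2: "length h \<ge> 2" using ns unfolding stops_def h_def by auto
    have msp: "merge_step pv b \<omega> h h'" using step that(1) rb ns unfolding h_def h'_def by blast
    obtain i j where ij: "i < length h" "j < length h" "i \<noteq> j"
      and ms: "mset h' = mset h - {# h ! i, h ! j #} + {# h ! i \<union> h ! j #}"
      using msp unfolding merge_step_def by blast
    have sub: "{# h ! i, h ! j #} \<subseteq># mset h" using pos2[OF ij] .
    have "length h' = size (mset h')" by simp
    also have "\<dots> = length h - 2 + 1" using ms sub by (simp add: size_Diff_submset)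
    finally have lh': "length h' = length h - 1" using len2 by simp
    have cl: "\<forall>X\<in>set h'. is_cluster Cs X"
    proof
      fix X assume "X \<in> set h'"
      then have "X \<in># mset h - {# h ! i, h ! j #} + {# h ! i \<union> h ! j #}" using ms
        by (metis set_mset_mset)
      then have "X \<in># mset h \<or> X = h ! i \<union> h ! j" by (auto dest: in_diffD)
      then show "is_cluster Cs X" using IH ij unfolding h_def
        by (auto intro: is_cluster_Un)
    qed
    have ps: "H0 \<longrightarrow> (\<forall>x y. {#x,y#} \<subseteq># mset h' \<longrightarrow> sim x y)"
    proof
      assume H0
      show "\<forall>x y. {#x,y#} \<subseteq># mset h' \<longrightarrow> sim x y"
        unfolding ms
        apply (rule msim_step[where P = "is_cluster Cs"])
        using sub IH \<open>H0\<close> sim_sym merge_inv unfolding h_def merge_invariant_def by auto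
    qed
    show ?case using IH lh' len2 cl ps unfolding h_def h'_def by auto
  qed
  define simpair where "simpair b \<omega> \<longleftrightarrow> (\<exists>i<length (cfg b \<omega>). \<exists>j<length (cfg b \<omega>). i \<noteq> j \<and> sim (cfg b \<omega> ! i) (cfg b \<omega> ! j))" for b \<omega>
  define F where "F b = {\<omega> \<in> space M. rejects_at pv cfg c b \<omega> \<and> simpair b \<omega>}" for b
  have simpair_m[measurable]: "Measurable.pred M (simpair b)" for b
    unfolding simpair_def by (rule cfgQ)
  have F_m[measurable]: "F b \<in> sets M" for b
    unfolding F_def rejects_at_def all_small_def by measurable
  have rejb: "b < K - 1" if "\<omega> \<in> space M" "rejects_at pv cfg c b \<omega>" for b \<omega>
    using inv[OF that(1), of b] that(2) unfolding rejects_at_def by auto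
  have Fb: "measure M (F b) \<le> c" for b
  proof -
    define hist where "hist \<omega> = map (\<lambda>b'. cfg b' \<omega>) [0..<Suc b]" for \<omega>
    define R where "R = {\<omega>\<in>space M. reached pv cfg c b \<omega>}"
    define S where "S = hist ` R"
    define G where "G xs = {\<omega>\<in>space M. reached pv cfg c b \<omega> \<and> (\<forall>b'\<le>b. cfg b' \<omega> = xs ! b')}" for xs
    define L where "L = {h. set h \<subseteq> {X. is_cluster Cs X} \<and> length h \<le> K}"
    have finL: "finite L" unfolding L_def by (rule finite_lists_length_le[OF finite_clusters])
    have reach_mono: "reached pv cfg c b' \<omega>" if "reached pv cfg c b \<omega>" "b' \<le> b" for b' \<omega>
      using that unfolding reached_def by auto
    have "S \<subseteq> {xs. set xs \<subseteq> L \<and> length xs \<le> Suc b}"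
    proof
      fix xs assume "xs \<in> S"
      then obtain \<omega> where w: "\<omega> \<in> space M" "reached pv cfg c b \<omega>" "xs = hist \<omega>"
        unfolding S_def R_def by auto
      have "cfg b' \<omega> \<in> L" if "b' \<le> b" for b'
        using inv[OF w(1) reach_mono[OF w(2) that]] unfolding L_def by auto
      then show "xs \<in> {xs. set xs \<subseteq> L \<and> length xs \<le> Suc b}"
        unfolding w(3) hist_def by auto
    qed
    then have finS: "finite S" using finite_lists_length_le[OF finL] finite_subset by blast
    have lenS: "length xs = Suc b" if "xs \<in> S" for xs
      using that unfolding S_def hist_def by auto
    have G_m: "G xs \<in> sets M" for xs
    proof -
      have "Measurable.pred M (\<lambda>\<omega>. cfg b' \<omega> = xs ! b')" for b' by (rule cfgQ)
      then show ?thesis unfolding G_def by measurable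
    qed
    have disj: "disjoint_family_on G S"
      unfolding disjoint_family_on_def
    proof (intro ballI impI)
      fix xs ys assume xy: "xs \<in> S" "ys \<in> S" "xs \<noteq> ys"
      show "G xs \<inter> G ys = {}"
      proof (rule ccontr)
        assume "G xs \<inter> G ys \<noteq> {}"
        then obtain \<omega> where "\<omega> \<in> G xs" "\<omega> \<in> G ys" by auto
        then have "\<forall>b'\<le>b. xs ! b' = ys ! b'" unfolding G_def by auto
        then have "xs = ys" using lenS[OF xy(1)] lenS[OF xy(2)]
          by (intro nth_equalityI) auto
        then show False using xy(3) by simp
      qed
    qed
    have FG: "F b \<subseteq> (\<Union>xs\<in>S. F b \<inter> G xs)"
    proof
      fix \<omega> assume w: "\<omega> \<in> F b"
      then have "\<omega> \<in> R" unfolding F_def R_def rejects_at_def by auto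
      moreover have "\<omega> \<in> G (hist \<omega>)" using w unfolding F_def G_def hist_def rejects_at_def
        by (auto simp: nth_map simp del: upt_Suc)
      ultimately show "\<omega> \<in> (\<Union>xs\<in>S. F b \<inter> G xs)" using w unfolding S_def by auto
    qed
    have each: "measure M (F b \<inter> G xs) \<le> c * measure M (G xs)" if "xs \<in> S" for xs
    proof (cases "\<exists>i<length (xs!b). \<exists>j<length (xs!b). i \<noteq> j \<and> sim (xs!b ! i) (xs!b ! j)")
      case True
      then obtain i j where ij: "i<length (xs!b)" "j<length (xs!b)" "i \<noteq> j" "sim (xs!b ! i) (xs!b ! j)"
        by blast
      have "F b \<inter> G xs \<subseteq> {\<omega> \<in> space M. reached pv cfg c b \<omega> \<and> (\<forall>b'\<le>b. cfg b' \<omega> = xs ! b')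
                                          \<and> pv b i j \<omega> \<le> c}"
      proof
        fix \<omega> assume w: "\<omega> \<in> F b \<inter> G xs"
        then have "cfg b \<omega> = xs ! b" "all_small pv cfg c b \<omega>"
          unfolding F_def G_def rejects_at_def by auto
        then have "pv b i j \<omega> < c" using ij unfolding all_small_def by auto
        then show "\<omega> \<in> {\<omega> \<in> space M. reached pv cfg c b \<omega> \<and> (\<forall>b'\<le>b. cfg b' \<omega> = xs ! b')
                                          \<and> pv b i j \<omega> \<le> c}"
          using w unfolding G_def by auto
      qed
      then have "measure M (F b \<inter> G xs) \<le> measure M {\<omega> \<in> space M. reached pv cfg c b \<omega> \<and> (\<forall>b'\<le>b. cfg b' \<omega> = xs ! b')
                                          \<and> pv b i j \<omega> \<le> c}"
      proof (rule finite_measure_mono)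
        have "Measurable.pred M (\<lambda>\<omega>. cfg b' \<omega> = xs ! b')" for b' by (rule cfgQ)
        then show "{\<omega> \<in> space M. reached pv cfg c b \<omega> \<and> (\<forall>b'\<le>b. cfg b' \<omega> = xs ! b')
                                          \<and> pv b i j \<omega> \<le> c} \<in> sets M" by measurable
      qed
      also have "\<dots> \<le> c * measure M (G xs)"
        using valid[rule_format, of i "\<lambda>k. xs ! k" b j c] ij c0 unfolding G_def by auto
      finally show ?thesis .
    next
      case False
      have "F b \<inter> G xs = {}"
      proof (rule ccontr)
        assume "F b \<inter> G xs \<noteq> {}"
        then obtain \<omega> where w: "\<omega> \<in> F b" "\<omega> \<in> G xs" by auto
        then have "cfg b \<omega> = xs ! b" "simpair b \<omega>" unfolding F_def G_def by auto
        then show False using False unfolding simpair_def by auto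
      qed
      then show ?thesis using c0 by simp
    qed
    have "measure M (F b) \<le> measure M (\<Union>xs\<in>S. F b \<inter> G xs)"
    proof (rule finite_measure_mono[OF FG])
      show "(\<Union>xs\<in>S. F b \<inter> G xs) \<in> sets M" using finS
        by (intro sets.finite_UN sets.Int F_m G_m) auto
    qed
    also have "\<dots> \<le> (\<Sum>xs\<in>S. measure M (F b \<inter> G xs))"
      using finS G_m by (intro measure_UNION_le) auto
    also have "\<dots> \<le> (\<Sum>xs\<in>S. c * measure M (G xs))"
      using each by (intro sum_mono) auto
    also have "\<dots> = c * measure M (\<Union>xs\<in>S. G xs)"
      using finS G_m disj by (simp add: sum_distrib_left measure_finite_Union emeasure_finite image_subset_iff)
    also have "\<dots> \<le> c * 1" using c0 by (intro mult_left_mono) (auto simp: prob_le_1)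
    finally show ?thesis by simp
  qed
  have E2: "{\<omega> \<in> space M. \<exists>b. rejects_at pv cfg c b \<omega> \<and>
            (\<exists>i<length (cfg b \<omega>). \<exists>j<length (cfg b \<omega>). i \<noteq> j \<and> sim (cfg b \<omega> ! i) (cfg b \<omega> ! j))}
        = (\<Union>b\<in>{..<K-1}. F b)"
    unfolding F_def simpair_def using rejb by auto
  have part2: "measure M (\<Union>b\<in>{..<K-1}. F b) \<le> \<alpha>"
  proof -
    have "measure M (\<Union>b\<in>{..<K-1}. F b) \<le> (\<Sum>b\<in>{..<K-1}. measure M (F b))"
      by (rule measure_UNION_le) auto
    also have "\<dots> \<le> (\<Sum>b\<in>{..<K-1}. c)" by (rule sum_mono) (rule Fb)
    also have "\<dots> = real (K - 1) * c" by simp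
    also have "\<dots> \<le> \<alpha>" using K2 alpha unfolding c_def by (simp add: field_simps of_nat_diff)
    finally show ?thesis .
  qed
  have part1: "H0 \<longrightarrow> measure M {\<omega> \<in> space M. \<exists>b. rejects_at pv cfg c b \<omega>} \<le> \<alpha>"
  proof
    assume H0
    have "{\<omega> \<in> space M. \<exists>b. rejects_at pv cfg c b \<omega>} \<subseteq> (\<Union>b\<in>{..<K-1}. F b)"
    proof
      fix \<omega> assume "\<omega> \<in> {\<omega> \<in> space M. \<exists>b. rejects_at pv cfg c b \<omega>}"
      then obtain b where w: "\<omega> \<in> space M" "rejects_at pv cfg c b \<omega>" by auto
      then have r: "reached pv cfg c b \<omega>" and l2: "length (cfg b \<omega>) \<ge> 2" unfolding rejects_at_def by auto
      have "{#cfg b \<omega> ! 0, cfg b \<omega> ! 1#} \<subseteq># mset (cfg b \<omega>)" using l2 by (intro pos2) auto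
      then have "sim (cfg b \<omega> ! 0) (cfg b \<omega> ! 1)" using inv[OF w(1) r] \<open>H0\<close> by blast
      then have "simpair b \<omega>" unfolding simpair_def using l2
        by (intro exI[of _ 0] conjI exI[of _ 1]) auto
      then show "\<omega> \<in> (\<Union>b\<in>{..<K-1}. F b)" using w rejb unfolding F_def by auto
    qed
    then have "measure M {\<omega> \<in> space M. \<exists>b. rejects_at pv cfg c b \<omega>} \<le> measure M (\<Union>b\<in>{..<K-1}. F b)"
      by (intro finite_measure_mono) auto
    then show "measure M {\<omega> \<in> space M. \<exists>b. rejects_at pv cfg c b \<omega>} \<le> \<alpha>" using part2 by simp
  qed
  show ?thesis using part1 part2 E2 unfolding H0_def by simp
qed

end
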